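(* Let $F:\mathbb{F}_{2^n}\to\mathbb{F}_{2^n}$ be differentially $4$-uniform. Let $A=\{(a,c,d):\exists\,b\text{ with }\mathrm{EBCT}_F(a,b,c,d)=4\}$ and $B=\{(c,d,b):\exists\,a\text{ with }\mathrm{EBCT}_F(a,b,c,d)=4\}$. For $a,b,c,d\in\mathbb{F}_{2^n}^*$: $\mathrm{EBCT}_F(a,b,c,d)=2$ if and only if $\mathrm{LBCT}_F(a,c,d)=\mathrm{UBCT}_F(c,d,b)=2$. Furthermore, for $a,c,d\in\mathbb{F}_{2^n}^*$, $(a,c,d)\in A$ if and only if $\mathrm{LBCT}_F(a,c,d)=4$; and for $c,d,b\in\mathbb{F}_{2^n}^*$, $(c,d,b)\in B$ if and only if $\mathrm{UBCT}_F(c,d,b)=4$.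
   Context: $\mathrm{DDT}_F(a,b)=|\{X:F(X+a)+F(X)=b\}|$; $F$ is differentially $4$-uniform if $\mathrm{DDT}_F(a,b)\le4$ for all $a\neq0$, $b$. For any function $F$: $\mathrm{EBCT}_F(a,b,c,d)=|\{X: F(X)+F(X+a)=b,\ F(X)+F(X+c)=d,\ F(X+a+c)+F(X+a)=d\}|$; $\mathrm{LBCT}_F(a,b,c)=|\{X: \exists Y,\ X+Y=b,\ F(X+a)+F(Y+a)=c,\ F(X)+F(Y)=c\}|$; $\mathrm{UBCT}_F(a,b,c)=|\{X: \exists Y,\ F(X+a)+F(Y+a)=c,\ F(X)+F(Y)=c,\ F(X)+F(X+a)=b\}|$ (variables in $\mathbb{F}_{2^n}$). *)

theory Defs
  imports Main
begin

text \<open>Functions F on a finite field (the field GF(2^n) is modelled by a type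
  'a of class field and finite with CARD('a) = 2^n). Addition is field addition.\<close>

definition DDT :: "('a::{field,finite} \<Rightarrow> 'a) \<Rightarrow> 'a \<Rightarrow> 'a \<Rightarrow> nat" where
  "DDT F a b = card {X. F (X + a) + F X = b}"

definition diff_4_uniform :: "('a::{field,finite} \<Rightarrow> 'a) \<Rightarrow> bool" where
  "diff_4_uniform F \<longleftrightarrow> (\<forall>a b. a \<noteq> 0 \<longrightarrow> DDT F a b \<le> 4)"

definition EBCT :: "('a::{field,finite} \<Rightarrow> 'a) \<Rightarrow> 'a \<Rightarrow> 'a \<Rightarrow> 'a \<Rightarrow> 'a \<Rightarrow> nat" where
  "EBCT F a b c d = card {X. F X + F (X + a) = b \<and> F X + F (X + c) = d
                            \<and> F (X + a + c) + F (X + a) = d}"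

definition LBCT :: "('a::{field,finite} \<Rightarrow> 'a) \<Rightarrow> 'a \<Rightarrow> 'a \<Rightarrow> 'a \<Rightarrow> nat" where
  "LBCT F a b c = card {X. \<exists>Y. X + Y = b \<and> F (X + a) + F (Y + a) = c \<and> F X + F Y = c}"

definition UBCT :: "('a::{field,finite} \<Rightarrow> 'a) \<Rightarrow> 'a \<Rightarrow> 'a \<Rightarrow> 'a \<Rightarrow> nat" where
  "UBCT F a b c = card {X. \<exists>Y. F (X + a) + F (Y + a) = c \<and> F X + F Y = c
                                \<and> F X + F (X + a) = b}"

end

theory Submission
  imports Defs "HOL-Number_Theory.Residues" "HOL-Computational_Algebra.Euclidean_Algorithm"
begin

lemma char2:
  assumes "card (UNIV :: 'a::{field,finite} set) = 2 ^ n"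
  shows "(x::'a) + x = 0"
proof -
  have pos: "CHAR('a) > 0" by (rule finite_imp_CHAR_pos) simp
  have pr: "prime CHAR('a)" using prime_CHAR_semidom[OF pos] .
  have "CHAR('a) dvd 2 ^ n" using CHAR_dvd_CARD[where 'a='a] assms by simp
  hence "CHAR('a) dvd 2" using pr prime_dvd_power by blast
  hence "CHAR('a) = 2" using pr
    using primes_dvd_imp_eq two_is_prime_nat by blast
  hence "- x = x" by (rule uminus_CHAR_2)
  thus ?thesis by (metis add.right_inverse)
qed

definition Eset :: "('a::{field,finite} \<Rightarrow> 'a) \<Rightarrow> 'a \<Rightarrow> 'a \<Rightarrow> 'a \<Rightarrow> 'a \<Rightarrow> 'a set" where
  "Eset F a b c d = {X. F X + F (X + a) = b \<and> F X + F (X + c) = d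
                            \<and> F (X + a + c) + F (X + a) = d}"
definition Lset :: "('a::{field,finite} \<Rightarrow> 'a) \<Rightarrow> 'a \<Rightarrow> 'a \<Rightarrow> 'a \<Rightarrow> 'a set" where
  "Lset F a c d = {X. \<exists>Y. X + Y = c \<and> F (X + a) + F (Y + a) = d \<and> F X + F Y = d}"
definition Uset :: "('a::{field,finite} \<Rightarrow> 'a) \<Rightarrow> 'a \<Rightarrow> 'a \<Rightarrow> 'a \<Rightarrow> 'a set" where
  "Uset F c d b = {X. \<exists>Y. F (X + c) + F (Y + c) = b \<and> F X + F Y = b \<and> F X + F (X + c) = d}"
definition Dset :: "('a::{field,finite} \<Rightarrow> 'a) \<Rightarrow> 'a \<Rightarrow> 'a \<Rightarrow> 'a set" where
  "Dset F c d = {X. F X + F (X + c) = d}"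

lemma c2_iff:
  assumes c2: "\<And>x::'a::{field,finite}. x + x = 0"
  shows "(x + y = z) \<longleftrightarrow> (y = x + (z::'a))"
proof
  assume "x + y = z" thus "y = x + z" by (metis add.assoc add.left_neutral c2)
next
  assume "y = x + z" thus "x + y = z" by (metis add.assoc add.left_neutral c2)
qed

lemma c2_cancel:
  assumes c2: "\<And>x::'a::{field,finite}. x + x = 0"
  shows "x + y + y = (x::'a)"
  by (metis add.assoc add.right_neutral c2)

lemma Dcard:
  assumes "diff_4_uniform F" "c \<noteq> 0"
  shows "card (Dset F c d) \<le> 4"
proof -
  have "Dset F c d = {X. F (X + c) + F X = d}" unfolding Dset_def by (simp add: add.commute)
  thus ?thesis using assms unfolding diff_4_uniform_def DDT_def by metis
qed

lemma c2_left:
  assumes c2: "\<And>x::'a::{field,finite}. x + x = 0"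
  shows "x + (x + y) = (y::'a)"
  by (metis add.assoc add.left_neutral c2)

lemma E_closed:
  fixes F :: "'a::{field,finite} \<Rightarrow> 'a"
  assumes c2: "\<And>x::'a::{field,finite}. x + x = 0"
    and X: "X \<in> Eset F a b c d"
  shows "X + a \<in> Eset F a b c d" "X + c \<in> Eset F a b c d" "X + a + c \<in> Eset F a b c d"
proof -
  have cc: "\<And>x y::'a. x + y + y = x" using c2_cancel[OF c2] .
  have cl: "\<And>x y::'a. x + (x + y) = y" using c2_left[OF c2] .
  from X have h1: "F X + F (X + a) = b" and h2: "F X + F (X + c) = d"
    and h3: "F (X + a + c) + F (X + a) = d" unfolding Eset_def by auto
  have e1: "F (X + a) = F X + b" by (rule c2_iff[OF c2, THEN iffD1, OF h1])
  have e2: "F (X + c) = F X + d" by (rule c2_iff[OF c2, THEN iffD1, OF h2])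
  have h3': "F (X + a) + F (X + a + c) = d" using h3 by (simp add: add.commute)
  have e3: "F (X + a + c) = F (X + a) + d" by (rule c2_iff[OF c2, THEN iffD1, OF h3'])
  have e3': "F (X + a + c) = F X + b + d" using e3 e1 by simp
  have p1: "X + a + a = X" "X + c + c = X" "X + a + c + a = X + c" "X + a + c + c = X + a"
    "X + c + a = X + a + c" "X + c + a + c = X + a" "X + a + c + a + c = X"
    using cc by (simp_all add: add_ac cl)
  show "X + a \<in> Eset F a b c d" unfolding Eset_def p1
    using e1 e2 e3' by (simp add: add_ac cl c2)
  show "X + c \<in> Eset F a b c d" unfolding Eset_def p1
    using e1 e2 e3' by (simp add: add_ac cl c2)
  show "X + a + c \<in> Eset F a b c d" unfolding Eset_def p1
    using e1 e2 e3' by (simp add: add_ac cl c2)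
qed

lemma four:
  fixes F :: "'a::{field,finite} \<Rightarrow> 'a"
  assumes c2: "\<And>x::'a::{field,finite}. x + x = 0"
    and X: "X \<in> Eset F a b c d" and a: "a \<noteq> 0" and c: "c \<noteq> 0" and ac: "a \<noteq> c"
    and S: "Eset F a b c d \<subseteq> S"
  shows "4 \<le> card S"
proof -
  have cc: "\<And>x y::'a. x + y + y = x" using c2_cancel[OF c2] .
  have sub: "{X, X + a, X + c, X + a + c} \<subseteq> S" using E_closed[OF c2 X] X S by auto
  have ne: "\<And>u v::'a. u \<noteq> 0 \<Longrightarrow> X + u \<noteq> X" by simp
  have d1: "X + a \<noteq> X + c" using ac by simp
  have d2: "X + a + c \<noteq> X" using ac by (metis add.assoc add.right_neutral add_left_imp_eq c2_iff[OF c2])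
  have d3: "X + a + c \<noteq> X + a" using c by simp
  have d4: "X + a + c \<noteq> X + c" using a by (metis add.commute add.left_commute add_left_imp_eq add.right_neutral)
  have "card {X, X + a, X + c, X + a + c} = 4"
    using a c d1 d2 d3 d4 by (auto simp: eq_commute[of X])
  thus ?thesis using card_mono[OF _ sub] by simp
qed

lemma L_char:
  fixes F :: "'a::{field,finite} \<Rightarrow> 'a"
  assumes c2: "\<And>x::'a::{field,finite}. x + x = 0"
  shows "Lset F a c d = {X. F X + F (X + c) = d \<and> F (X + a) + F (X + a + c) = d}"
proof -
  have "\<And>X Y. (X + Y = c) = (Y = X + c)" using c2_iff[OF c2] by blast
  thus ?thesis unfolding Lset_def by (auto simp: add.commute add.left_commute)
qed

lemma E_sub_L:
  fixes F :: "'a::{field,finite} \<Rightarrow> 'a"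
  assumes c2: "\<And>x::'a::{field,finite}. x + x = 0"
  shows "Eset F a b c d \<subseteq> Lset F a c d"
  unfolding L_char[OF c2] Eset_def by (auto simp: add.commute)

lemma L_sub_D:
  fixes F :: "'a::{field,finite} \<Rightarrow> 'a"
  assumes c2: "\<And>x::'a::{field,finite}. x + x = 0"
  shows "Lset F a c d \<subseteq> Dset F c d"
  unfolding L_char[OF c2] Dset_def by auto

lemma U_sub_D: "Uset F c d b \<subseteq> Dset F c d"
  unfolding Uset_def Dset_def by auto

lemma E_sub_U:
  fixes F :: "'a::{field,finite} \<Rightarrow> 'a"
  assumes c2: "\<And>x::'a::{field,finite}. x + x = 0"
  shows "Eset F a b c d \<subseteq> Uset F c d b"
proof
  fix X assume X: "X \<in> Eset F a b c d"
  from X have h1: "F X + F (X + a) = b" and h2: "F X + F (X + c) = d"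
    and h3: "F (X + a + c) + F (X + a) = d" unfolding Eset_def by auto
  have e1: "F (X + a) = F X + b" by (rule c2_iff[OF c2, THEN iffD1, OF h1])
  have e2: "F (X + c) = F X + d" by (rule c2_iff[OF c2, THEN iffD1, OF h2])
  have h3': "F (X + a) + F (X + a + c) = d" using h3 by (simp add: add.commute)
  have e3: "F (X + a + c) = F (X + a) + d" by (rule c2_iff[OF c2, THEN iffD1, OF h3'])
  have "F (X + c) + F (X + a + c) = b" using e1 e2 e3 c2
    by (metis add.assoc add.commute c2_cancel[OF c2])
  then show "X \<in> Uset F c d b" unfolding Uset_def using e1 e2 c2_iff[OF c2]
    by (auto intro!: exI[of _ "X + a"] simp: add.commute add.left_commute)
qed

lemma U_to_E:
  fixes F :: "'a::{field,finite} \<Rightarrow> 'a"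
  assumes c2: "\<And>x::'a::{field,finite}. x + x = 0"
    and X: "X \<in> Uset F c d b"
  obtains a where "X \<in> Eset F a b c d"
proof -
  from X obtain Y where h1: "F (X + c) + F (Y + c) = b" and h2: "F X + F Y = b"
    and h3: "F X + F (X + c) = d" unfolding Uset_def by auto
  have Y: "X + (X + Y) = Y" by (metis add.assoc add.left_neutral c2)
  have "F (Y + c) + F Y = d" using h1 h2 h3
    by (metis add.assoc add.commute c2_iff[OF c2])
  moreover have Y': "X + (X + Y) + c = Y + c" using Y by simp
  ultimately have "X \<in> Eset F (X + Y) b c d" unfolding Eset_def mem_Collect_eq Y Y' using h2 h3
    by (simp add: add.commute)
  thus ?thesis using that by blast
qed

lemma D_eq_E:
  fixes F :: "'a::{field,finite} \<Rightarrow> 'a"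
  assumes c2: "\<And>x::'a::{field,finite}. x + x = 0"
  shows "Eset F a d a d = Dset F a d" "Lset F a a d = Dset F a d"
  unfolding Eset_def Dset_def L_char[OF c2] c2_cancel[OF c2]
  by (auto simp: add.commute)

lemma E_b:
  assumes "X \<in> Eset F a b a d" shows "b = d"
  using assms unfolding Eset_def by auto

lemma cardE: "EBCT F a b c d = card (Eset F a b c d)"
  unfolding EBCT_def Eset_def ..
lemma cardL: "LBCT F a c d = card (Lset F a c d)"
  unfolding LBCT_def Lset_def ..
lemma cardU: "UBCT F c d b = card (Uset F c d b)"
  unfolding UBCT_def Uset_def ..

theorem mainTheorem10:
  fixes F :: "'a::{field,finite} \<Rightarrow> 'a" and n :: nat
  assumes card: "card (UNIV :: 'a set) = 2 ^ n"
    and uni: "diff_4_uniform F"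
  defines "A \<equiv> {(a, c, d). \<exists>b. EBCT F a b c d = 4}"
    and "B \<equiv> {(c, d, b). \<exists>a. EBCT F a b c d = 4}"
  shows "(\<forall>a b c d. a \<noteq> 0 \<and> b \<noteq> 0 \<and> c \<noteq> 0 \<and> d \<noteq> 0 \<longrightarrow>
            (EBCT F a b c d = 2 \<longleftrightarrow> LBCT F a c d = 2 \<and> UBCT F c d b = 2))
       \<and> (\<forall>a c d. a \<noteq> 0 \<and> c \<noteq> 0 \<and> d \<noteq> 0 \<longrightarrow> ((a, c, d) \<in> A \<longleftrightarrow> LBCT F a c d = 4))
       \<and> (\<forall>c d b. c \<noteq> 0 \<and> d \<noteq> 0 \<and> b \<noteq> 0 \<longrightarrow> ((c, d, b) \<in> B \<longleftrightarrow> UBCT F c d b = 4))"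
proof (intro conjI allI impI)
  have c2: "\<And>x::'a. x + x = 0" using char2[OF card] .
  have fin: "\<And>S::'a set. finite S" by simp
  have mem2: "a \<noteq> 0" if "b \<noteq> 0" "X \<in> Eset F a b c d" for X a b c d
  proof
    assume "a = 0"
    hence "F X + F X = b" using that(2) unfolding Eset_def by simp
    thus False using c2 that(1) by metis
  qed
  have eqbd: "\<And>X a b d. X \<in> Eset F a b a d \<Longrightarrow> b = d" unfolding Eset_def by auto
  {
    fix a b c d :: 'a assume nz: "a \<noteq> 0 \<and> b \<noteq> 0 \<and> c \<noteq> 0 \<and> d \<noteq> 0"
    have D4: "card (Dset F c d) \<le> 4" using Dcard[OF uni] nz by blast
    show "EBCT F a b c d = 2 \<longleftrightarrow> LBCT F a c d = 2 \<and> UBCT F c d b = 2"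
    proof
      assume E2: "EBCT F a b c d = 2"
      then obtain X where X: "X \<in> Eset F a b c d" unfolding cardE by fastforce
      have ac: "a = c"
      proof (rule ccontr)
        assume "a \<noteq> c"
        hence "4 \<le> card (Eset F a b c d)" using four[OF c2 X] nz by blast
        thus False using E2 by (simp add: cardE)
      qed
      have bd: "b = d" using eqbd X ac by blast
      have U: "Uset F c d d = Dset F c d"
        using U_sub_D E_sub_U[OF c2, of F c d c d] D_eq_E[OF c2, of F c d] by blast
      show "LBCT F a c d = 2 \<and> UBCT F c d b = 2"
        using E2 unfolding cardE cardL cardU ac bd D_eq_E[OF c2] U by simp
    next
      assume LU: "LBCT F a c d = 2 \<and> UBCT F c d b = 2"
      have ac: "a = c"
      proof (rule ccontr)
        assume nac: "a \<noteq> c"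
        from LU obtain X where X: "X \<in> Lset F a c d" unfolding cardL by fastforce
        hence "X \<in> Eset F a (F X + F (X + a)) c d" unfolding L_char[OF c2] Eset_def
          by (simp add: add.commute)
        hence "4 \<le> card (Lset F a c d)" using four[OF c2 _ _ _ nac E_sub_L[OF c2]] nz by blast
        thus False using LU by (simp add: cardL)
      qed
      from LU obtain X where X: "X \<in> Uset F c d b" unfolding cardU by fastforce
      then obtain a' where a': "X \<in> Eset F a' b c d" using U_to_E[OF c2] by blast
      have a'0: "a' \<noteq> 0" using mem2 a' nz by blast
      have "a' = c"
      proof (rule ccontr)
        assume "a' \<noteq> c"
        hence "4 \<le> card (Dset F c d)"
          using four[OF c2 a' a'0 _ _ subset_trans[OF E_sub_L[OF c2] L_sub_D[OF c2]]] nz by blast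
        moreover have "card (Dset F c d) = 2" using LU ac D_eq_E[OF c2] cardL by metis
        ultimately show False by simp
      qed
      hence bd: "b = d" using eqbd a' by blast
      show "EBCT F a b c d = 2" using LU unfolding cardE cardL ac bd D_eq_E[OF c2] by simp
    qed
  next
    fix a c d :: 'a assume nz: "a \<noteq> 0 \<and> c \<noteq> 0 \<and> d \<noteq> 0"
    have D4: "card (Dset F c d) \<le> 4" using Dcard[OF uni] nz by blast
    have L4: "card (Lset F a c d) \<le> 4" using card_mono[OF fin L_sub_D[OF c2, of F a c d]] D4 by linarith
    show "(a, c, d) \<in> A \<longleftrightarrow> LBCT F a c d = 4"
    proof
      assume "(a, c, d) \<in> A"
      then obtain b where "card (Eset F a b c d) = 4" unfolding A_def cardE by auto
      thus "LBCT F a c d = 4" using card_mono[OF fin E_sub_L[OF c2]] L4 unfolding cardL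
        by (metis le_antisym)
    next
      assume L: "LBCT F a c d = 4"
      from L obtain X where X: "X \<in> Lset F a c d" unfolding cardL by fastforce
      hence XE: "X \<in> Eset F a (F X + F (X + a)) c d" unfolding L_char[OF c2] Eset_def
        by (simp add: add.commute)
      show "(a, c, d) \<in> A"
      proof (cases "a = c")
        case True
        have "EBCT F a d c d = 4" using L unfolding cardE cardL True D_eq_E[OF c2] .
        thus ?thesis unfolding A_def by auto
      next
        case False
        have "4 \<le> card (Eset F a (F X + F (X + a)) c d)" using four[OF c2 XE _ _ False] nz by blast
        moreover have "card (Eset F a (F X + F (X + a)) c d) \<le> 4"
          using card_mono[OF fin E_sub_L[OF c2]] L unfolding cardL by metis
        ultimately have "EBCT F a (F X + F (X + a)) c d = 4" unfolding cardE by simp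
        thus ?thesis unfolding A_def by auto
      qed
    qed
  next
    fix c d b :: 'a assume nz: "c \<noteq> 0 \<and> d \<noteq> 0 \<and> b \<noteq> 0"
    have D4: "card (Dset F c d) \<le> 4" using Dcard[OF uni] nz by blast
    have U4: "card (Uset F c d b) \<le> 4" using card_mono[OF fin U_sub_D[of F c d b]] D4 by linarith
    show "(c, d, b) \<in> B \<longleftrightarrow> UBCT F c d b = 4"
    proof
      assume "(c, d, b) \<in> B"
      then obtain a where "card (Eset F a b c d) = 4" unfolding B_def cardE by auto
      thus "UBCT F c d b = 4" using card_mono[OF fin E_sub_U[OF c2]] U4 unfolding cardU
        by (metis le_antisym)
    next
      assume U: "UBCT F c d b = 4"
      from U obtain X where X: "X \<in> Uset F c d b" unfolding cardU by fastforce
      then obtain a' where a': "X \<in> Eset F a' b c d" using U_to_E[OF c2] by blast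
      have a'0: "a' \<noteq> 0" using mem2 a' nz by blast
      show "(c, d, b) \<in> B"
      proof (cases "a' = c")
        case True
        hence bd: "b = d" using eqbd a' by blast
        have "card (Dset F c d) = 4" using card_mono[OF fin U_sub_D[of F c d b]] D4 U unfolding cardU by simp
        hence "EBCT F c b c d = 4" unfolding cardE bd D_eq_E[OF c2] .
        thus ?thesis unfolding B_def by auto
      next
        case False
        have "4 \<le> card (Eset F a' b c d)" using four[OF c2 a' a'0 _ False] nz by blast
        moreover have "card (Eset F a' b c d) \<le> 4"
          using card_mono[OF fin E_sub_U[OF c2]] U unfolding cardU by metis
        ultimately have "EBCT F a' b c d = 4" unfolding cardE by simp
        thus ?thesis unfolding B_def by auto
      qed
    qed
  }
qed

end
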